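(* (i) Let $L,L',L''$ be simplicial complexes, and let $\varphi_i: L\to L'$ and $\psi_i: L'\to L''$ be simplicial maps for $i=1,\dots,m$. If $\psi_i\sim\psi_{i+1}$ for all $i=1,\dots,m-1$, then $\mathrm{SD}(\psi_1\circ\varphi_1,\dots,\psi_m\circ\varphi_m)\le\mathrm{SD}(\varphi_1,\dots,\varphi_m)$. Moreover, equality holds provided that for all $i$, $\psi_i$ admits a simplicial map $\mu_i: L''\to L'$ with $\mu_i\circ\psi_i\sim 1_{L'}$, and $\psi_i\circ\varphi_i\sim\psi_j\circ\varphi_j$ for all distinct $i,j$. (ii) Let $\varphi_i: L\to L'$ and $\psi_i: L''\to L$ be simplicial maps for $i=1,\dots,m$. If $\psi_i\sim\psi_{i+1}$ for all $i=1,\dots,m-1$, then $\mathrm{SD}(\varphi_1\circ\psi_1,\dots,\varphi_m\circ\psi_m)\le\mathrm{SD}(\varphi_1,\dots,\varphi_m)$. Moreover, equality holds provided that for all $i$, $\psi_i$ admits a simplicial map $\mu_i: L\to L''$ with $\psi_i\circ\mu_i\sim 1_L$, and $\varphi_i\circ\psi_i\sim\varphi_j\circ\psi_j$ for all distinct $i,j$.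
   Context: Simplicial maps $f,g: K\to K'$ are contiguous if $f(\sigma)\cup g(\sigma)$ is a simplex of $K'$ for every simplex $\sigma$ of $K$; $f\sim g$ (same contiguity class) if there is a finite chain of simplicial maps from $f$ to $g$ with consecutive ones contiguous. For simplicial maps $\varphi_1,\dots,\varphi_m: K\to K'$, $\mathrm{SD}(\varphi_1,\dots,\varphi_m)$ is the least $n\ge0$ such that $K$ is a union of subcomplexes $K_0,\dots,K_n$ with $\varphi_i|_{K_k}\sim\varphi_j|_{K_k}$ for all $i,j$ and $k$. *)

theory Defs
  imports Main "HOL-Library.Extended_Nat"
begin

definition simplicial_complex :: "'a set set \<Rightarrow> bool" where
  "simplicial_complex K \<longleftrightarrow>
     (\<forall>\<sigma>\<in>K. finite \<sigma> \<and> \<sigma> \<noteq> {}) \<and>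
     (\<forall>\<sigma>\<in>K. \<forall>\<tau>. \<tau> \<subseteq> \<sigma> \<and> \<tau> \<noteq> {} \<longrightarrow> \<tau> \<in> K)"

definition subcomplex :: "'a set set \<Rightarrow> 'a set set \<Rightarrow> bool" where
  "subcomplex J K \<longleftrightarrow> J \<subseteq> K \<and> simplicial_complex J"

text \<open>Simplicial map K \<rightarrow> K' (given by its vertex map; only values on
  vertices of K matter).\<close>
definition simplicial_map :: "'a set set \<Rightarrow> 'b set set \<Rightarrow> ('a \<Rightarrow> 'b) \<Rightarrow> bool" where
  "simplicial_map K K' f \<longleftrightarrow> (\<forall>\<sigma>\<in>K. f ` \<sigma> \<in> K')"

definition contiguous :: "'a set set \<Rightarrow> 'b set set \<Rightarrow> ('a \<Rightarrow> 'b) \<Rightarrow> ('a \<Rightarrow> 'b) \<Rightarrow> bool" where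
  "contiguous K K' f g \<longleftrightarrow> (\<forall>\<sigma>\<in>K. f ` \<sigma> \<union> g ` \<sigma> \<in> K')"

definition contiguity_class :: "'a set set \<Rightarrow> 'b set set \<Rightarrow> ('a \<Rightarrow> 'b) \<Rightarrow> ('a \<Rightarrow> 'b) \<Rightarrow> bool" where
  "contiguity_class K K' f g \<longleftrightarrow>
     simplicial_map K K' f \<and> simplicial_map K K' g \<and>
     (\<lambda>u v. simplicial_map K K' u \<and> simplicial_map K K' v \<and> contiguous K K' u v)\<^sup>*\<^sup>* f g"

text \<open>Simplicial distance SD(\<phi>_1,...,\<phi>_m) of maps K \<rightarrow> K' (indexed by 1..m):
  least n such that K is a union of subcomplexes K_0..K_n on each of which all
  restrictions are in the same contiguity class; \<infinity> if no such n exists.\<close>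
definition SD :: "'a set set \<Rightarrow> 'b set set \<Rightarrow> nat \<Rightarrow> (nat \<Rightarrow> 'a \<Rightarrow> 'b) \<Rightarrow> enat" where
  "SD K K' m \<phi> = Inf {enat n | n. \<exists>Ks :: nat \<Rightarrow> 'a set set.
      (\<forall>k\<le>n. subcomplex (Ks k) K) \<and> (\<Union>k\<le>n. Ks k) = K \<and>
      (\<forall>k\<le>n. \<forall>i\<in>{1..m}. \<forall>j\<in>{1..m}. contiguity_class (Ks k) K' (\<phi> i) (\<phi> j))}"

end

theory Submission
  imports Defs
begin



lemma sm_mono: "simplicial_map K K' f \<Longrightarrow> J \<subseteq> K \<Longrightarrow> simplicial_map J K' f"
  by (auto simp: simplicial_map_def)

lemma sm_comp: "simplicial_map K K' f \<Longrightarrow> simplicial_map K' K'' g \<Longrightarrow> simplicial_map K K'' (g \<circ> f)"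
  unfolding simplicial_map_def
proof (intro ballI)
  fix \<sigma> assume a: "\<forall>\<sigma>\<in>K. f ` \<sigma> \<in> K'" "\<forall>\<sigma>\<in>K'. g ` \<sigma> \<in> K''" and s: "\<sigma> \<in> K"
  then have "g ` (f ` \<sigma>) \<in> K''" by blast
  then show "(g \<circ> f) ` \<sigma> \<in> K''" by (simp add: image_comp)
qed

lemma sm_id: "simplicial_map K K id"
  by (auto simp: simplicial_map_def)

lemma cc_sm: "contiguity_class K K' f g \<Longrightarrow> simplicial_map K K' f \<and> simplicial_map K K' g"
  by (simp add: contiguity_class_def)

lemma cc_refl: "simplicial_map K K' f \<Longrightarrow> contiguity_class K K' f f"
  by (simp add: contiguity_class_def)

lemma rtranclp_map:
  assumes "r\<^sup>*\<^sup>* a b" and "\<And>u v. r u v \<Longrightarrow> s (h u) (h v)"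
  shows "s\<^sup>*\<^sup>* (h a) (h b)"
  using assms(1)
proof (induction rule: rtranclp_induct)
  case base then show ?case by simp
next
  case (step y z) then show ?case using assms(2) by (meson rtranclp.rtrancl_into_rtrancl)
qed

lemma cc_sym: "contiguity_class K K' f g \<Longrightarrow> contiguity_class K K' g f"
  unfolding contiguity_class_def
proof (elim conjE, intro conjI)
  let ?r = "\<lambda>u v. simplicial_map K K' u \<and> simplicial_map K K' v \<and> contiguous K K' u v"
  assume "?r\<^sup>*\<^sup>* f g"
  then have "(?r\<inverse>\<inverse>)\<^sup>*\<^sup>* g f" by (simp add: rtranclp_conversep)
  moreover have "?r\<inverse>\<inverse> = ?r" by (auto simp: contiguous_def Un_commute intro!: ext)
  ultimately show "?r\<^sup>*\<^sup>* g f" by simp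
qed auto

lemma cc_trans: "contiguity_class K K' f g \<Longrightarrow> contiguity_class K K' g h \<Longrightarrow> contiguity_class K K' f h"
  unfolding contiguity_class_def by auto

lemma cc_mono:
  assumes c: "contiguity_class K K' f g" and J: "J \<subseteq> K"
  shows "contiguity_class J K' f g"
proof -
  let ?rr = "\<lambda>u v. simplicial_map K K' u \<and> simplicial_map K K' v \<and> contiguous K K' u v"
  let ?ss = "\<lambda>u v. simplicial_map J K' u \<and> simplicial_map J K' v \<and> contiguous J K' u v"
  have r: "?rr\<^sup>*\<^sup>* f g" and sf: "simplicial_map K K' f" and sg: "simplicial_map K K' g"
    using c unfolding contiguity_class_def by auto
  have step: "?ss u v" if "?rr u v" for u v
    using that J unfolding contiguous_def simplicial_map_def by blast
  have "?ss\<^sup>*\<^sup>* f g" using r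
    by (induction rule: rtranclp_induct) (simp, erule rtranclp.rtrancl_into_rtrancl, erule step)
  then show ?thesis unfolding contiguity_class_def using sm_mono[OF sf J] sm_mono[OF sg J] by simp
qed

lemma cc_comp_left:
  assumes c: "contiguity_class K K' f g" and h: "simplicial_map K' K'' h"
  shows "contiguity_class K K'' (h \<circ> f) (h \<circ> g)"
proof -
  let ?rr = "\<lambda>u v. simplicial_map K K' u \<and> simplicial_map K K' v \<and> contiguous K K' u v"
  let ?ss = "\<lambda>u v. simplicial_map K K'' u \<and> simplicial_map K K'' v \<and> contiguous K K'' u v"
  have r: "?rr\<^sup>*\<^sup>* f g" and sf: "simplicial_map K K' f" and sg: "simplicial_map K K' g"
    using c unfolding contiguity_class_def by auto
  have step: "?ss (h \<circ> u) (h \<circ> v)" if "?rr u v" for u v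
  proof (intro conjI)
    show "simplicial_map K K'' (h \<circ> u)" "simplicial_map K K'' (h \<circ> v)"
      using that h sm_comp by blast+
    show "contiguous K K'' (h \<circ> u) (h \<circ> v)" unfolding contiguous_def
    proof
      fix \<sigma> assume "\<sigma> \<in> K"
      then have "u ` \<sigma> \<union> v ` \<sigma> \<in> K'" using that unfolding contiguous_def by blast
      then have "h ` (u ` \<sigma> \<union> v ` \<sigma>) \<in> K''" using h unfolding simplicial_map_def by blast
      then show "(h \<circ> u) ` \<sigma> \<union> (h \<circ> v) ` \<sigma> \<in> K''" by (simp add: image_Un image_comp)
    qed
  qed
  have "?ss\<^sup>*\<^sup>* (h \<circ> f) (h \<circ> g)" using r
    by (induction rule: rtranclp_induct) (simp, erule rtranclp.rtrancl_into_rtrancl, erule step)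
  then show ?thesis unfolding contiguity_class_def using sm_comp[OF sf h] sm_comp[OF sg h] by simp
qed

lemma cc_comp_right:
  assumes c: "contiguity_class K' K'' f g" and h: "simplicial_map K K' h"
  shows "contiguity_class K K'' (f \<circ> h) (g \<circ> h)"
proof -
  let ?rr = "\<lambda>u v. simplicial_map K' K'' u \<and> simplicial_map K' K'' v \<and> contiguous K' K'' u v"
  let ?ss = "\<lambda>u v. simplicial_map K K'' u \<and> simplicial_map K K'' v \<and> contiguous K K'' u v"
  have r: "?rr\<^sup>*\<^sup>* f g" and sf: "simplicial_map K' K'' f" and sg: "simplicial_map K' K'' g"
    using c unfolding contiguity_class_def by auto
  have step: "?ss (u \<circ> h) (v \<circ> h)" if "?rr u v" for u v
  proof (intro conjI)
    show "simplicial_map K K'' (u \<circ> h)" "simplicial_map K K'' (v \<circ> h)"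
      using that h sm_comp by blast+
    show "contiguous K K'' (u \<circ> h) (v \<circ> h)" unfolding contiguous_def
    proof
      fix \<sigma> assume "\<sigma> \<in> K"
      then have "h ` \<sigma> \<in> K'" using h unfolding simplicial_map_def by blast
      then have "u ` (h ` \<sigma>) \<union> v ` (h ` \<sigma>) \<in> K''" using that unfolding contiguous_def by blast
      then show "(u \<circ> h) ` \<sigma> \<union> (v \<circ> h) ` \<sigma> \<in> K''" by (simp add: image_comp)
    qed
  qed
  have "?ss\<^sup>*\<^sup>* (f \<circ> h) (g \<circ> h)" using r
    by (induction rule: rtranclp_induct) (simp, erule rtranclp.rtrancl_into_rtrancl, erule step)
  then show ?thesis unfolding contiguity_class_def using sm_comp[OF h sf] sm_comp[OF h sg] by simp
qed

lemma cc_chain: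
  assumes "\<forall>i\<in>{1..<m}. contiguity_class K K' (\<psi> i) (\<psi> (Suc i))"
    and smp: "\<forall>i\<in>{1..m}. simplicial_map K K' (\<psi> i)"
    and "i \<in> {1..m}" "j \<in> {1..m}"
  shows "contiguity_class K K' (\<psi> i) (\<psi> j)"
proof -
  have a: "contiguity_class K K' (\<psi> 1) (\<psi> i)" if "i \<in> {1..m}" for i
    using that
  proof (induction i)
    case 0 then show ?case by simp
  next
    case (Suc i)
    show ?case
    proof (cases "i = 0")
      case True
      then have "simplicial_map K K' (\<psi> 1)" using smp Suc.prems by auto
      then show ?thesis using True by (simp add: cc_refl)
    next
      case False
      then have "contiguity_class K K' (\<psi> 1) (\<psi> i)" using Suc by auto
      moreover have "contiguity_class K K' (\<psi> i) (\<psi> (Suc i))" using assms(1) Suc.prems False by auto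
      ultimately show ?thesis by (rule cc_trans)
    qed
  qed
  have "contiguity_class K K' (\<psi> i) (\<psi> 1)" using a[OF assms(3)] by (rule cc_sym)
  then show ?thesis using a[OF assms(4)] by (rule cc_trans)
qed

definition PP :: "'a set set \<Rightarrow> 'b set set \<Rightarrow> nat \<Rightarrow> (nat \<Rightarrow> 'a \<Rightarrow> 'b) \<Rightarrow> nat \<Rightarrow> bool" where
  "PP K K' m \<phi> n \<longleftrightarrow> (\<exists>Ks :: nat \<Rightarrow> 'a set set.
      (\<forall>k\<le>n. subcomplex (Ks k) K) \<and> (\<Union>k\<le>n. Ks k) = K \<and>
      (\<forall>k\<le>n. \<forall>i\<in>{1..m}. \<forall>j\<in>{1..m}. contiguity_class (Ks k) K' (\<phi> i) (\<phi> j)))"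

lemma SD_PP: "SD K K' m \<phi> = Inf {enat n | n. PP K K' m \<phi> n}"
  unfolding SD_def PP_def by simp

lemma SD_le:
  assumes "\<And>n. PP K K' m \<phi> n \<Longrightarrow> PP K2 K2' m \<chi> n"
  shows "SD K2 K2' m \<chi> \<le> SD K K' m \<phi>"
  unfolding SD_PP by (rule Inf_superset_mono) (auto dest: assms)

lemma PP_m0: "simplicial_complex K \<Longrightarrow> PP K K' 0 \<chi> n"
  unfolding PP_def
  apply (rule exI[where x="\<lambda>_. K"])
  apply (intro conjI)
    apply (simp add: subcomplex_def)
   apply (rule UN_constant_eq[of 0]; simp)
  apply simp
  done

lemma PP_pull:
  assumes P: "PP L L' m \<phi> n" and c2: "simplicial_complex L2" and h: "simplicial_map L2 L h"
    and H: "\<And>J i j. J \<subseteq> L2 \<Longrightarrow> i \<in> {1..m} \<Longrightarrow> j \<in> {1..m} \<Longrightarrow>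
            contiguity_class J L' (\<phi> i \<circ> h) (\<phi> j \<circ> h) \<Longrightarrow> contiguity_class J L2' (\<chi> i) (\<chi> j)"
  shows "PP L2 L2' m \<chi> n"
proof -
  obtain Ks where Ks: "\<forall>k\<le>n. subcomplex (Ks k) L" "(\<Union>k\<le>n. Ks k) = L"
      "\<forall>k\<le>n. \<forall>i\<in>{1..m}. \<forall>j\<in>{1..m}. contiguity_class (Ks k) L' (\<phi> i) (\<phi> j)"
    using P unfolding PP_def by blast
  define Js where "Js k = {\<tau>\<in>L2. h ` \<tau> \<in> Ks k}" for k
  have sub: "subcomplex (Js k) L2" if "k \<le> n" for k
  proof -
    have "simplicial_complex (Ks k)" using Ks(1) that by (simp add: subcomplex_def)
    then have K1: "\<And>\<sigma> \<tau>. \<sigma> \<in> Ks k \<Longrightarrow> \<tau> \<subseteq> \<sigma> \<Longrightarrow> \<tau> \<noteq> {} \<Longrightarrow> \<tau> \<in> Ks k"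
      unfolding simplicial_complex_def by blast
    have "simplicial_complex (Js k)"
      unfolding simplicial_complex_def
    proof (intro conjI ballI allI impI)
      fix \<sigma> assume "\<sigma> \<in> Js k"
      then show "finite \<sigma>" "\<sigma> \<noteq> {}" using c2 unfolding Js_def simplicial_complex_def by auto
    next
      fix \<sigma> \<tau> assume s: "\<sigma> \<in> Js k" and t: "\<tau> \<subseteq> \<sigma> \<and> \<tau> \<noteq> {}"
      then have "\<tau> \<in> L2" using c2 unfolding Js_def simplicial_complex_def by blast
      moreover have "h ` \<tau> \<in> Ks k"
        using K1[of "h ` \<sigma>" "h ` \<tau>"] s t unfolding Js_def by auto
      ultimately show "\<tau> \<in> Js k" unfolding Js_def by simp
    qed
    then show ?thesis unfolding subcomplex_def Js_def by auto
  qed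
  have un: "(\<Union>k\<le>n. Js k) = L2"
  proof
    show "(\<Union>k\<le>n. Js k) \<subseteq> L2" unfolding Js_def by auto
    show "L2 \<subseteq> (\<Union>k\<le>n. Js k)"
    proof
      fix \<tau> assume "\<tau> \<in> L2"
      then have "h ` \<tau> \<in> L" using h by (simp add: simplicial_map_def)
      then obtain k where "k \<le> n" "h ` \<tau> \<in> Ks k" using Ks(2) by auto
      then show "\<tau> \<in> (\<Union>k\<le>n. Js k)" using \<open>\<tau> \<in> L2\<close> unfolding Js_def by auto
    qed
  qed
  have cc: "contiguity_class (Js k) L2' (\<chi> i) (\<chi> j)" if "k \<le> n" "i \<in> {1..m}" "j \<in> {1..m}" for k i j
  proof (rule H)
    show "Js k \<subseteq> L2" unfolding Js_def by auto
    have "simplicial_map (Js k) (Ks k) h" unfolding Js_def simplicial_map_def by auto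
    then show "contiguity_class (Js k) L' (\<phi> i \<circ> h) (\<phi> j \<circ> h)"
      using Ks(3) that cc_comp_right by blast
  qed (use that in auto)
  show ?thesis unfolding PP_def
    apply (rule exI[where x=Js])
    apply (intro conjI allI impI ballI)
      apply (erule sub)
     apply (rule un)
    apply (erule cc; assumption)
    done
qed

theorem proposition3p7:
  fixes L :: "'a set set" and L' :: "'b set set" and L'' :: "'c set set" and m :: nat
  assumes cL: "simplicial_complex L" and cL': "simplicial_complex L'"
      and cL'': "simplicial_complex L''"
  shows
  "(\<forall>(\<phi> :: nat \<Rightarrow> 'a \<Rightarrow> 'b) (\<psi> :: nat \<Rightarrow> 'b \<Rightarrow> 'c).
      (\<forall>i\<in>{1..m}. simplicial_map L L' (\<phi> i) \<and> simplicial_map L' L'' (\<psi> i)) \<and>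
      (\<forall>i\<in>{1..<m}. contiguity_class L' L'' (\<psi> i) (\<psi> (Suc i)))
    \<longrightarrow> SD L L'' m (\<lambda>i. \<psi> i \<circ> \<phi> i) \<le> SD L L' m \<phi> \<and>
        ((\<forall>i\<in>{1..m}. \<exists>\<mu>. simplicial_map L'' L' \<mu> \<and> contiguity_class L' L' (\<mu> \<circ> \<psi> i) id) \<and>
         (\<forall>i\<in>{1..m}. \<forall>j\<in>{1..m}. i \<noteq> j \<longrightarrow>
             contiguity_class L L'' (\<psi> i \<circ> \<phi> i) (\<psi> j \<circ> \<phi> j))
         \<longrightarrow> SD L L'' m (\<lambda>i. \<psi> i \<circ> \<phi> i) = SD L L' m \<phi>))
   \<and>
   (\<forall>(\<phi> :: nat \<Rightarrow> 'a \<Rightarrow> 'b) (\<psi> :: nat \<Rightarrow> 'c \<Rightarrow> 'a).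
      (\<forall>i\<in>{1..m}. simplicial_map L L' (\<phi> i) \<and> simplicial_map L'' L (\<psi> i)) \<and>
      (\<forall>i\<in>{1..<m}. contiguity_class L'' L (\<psi> i) (\<psi> (Suc i)))
    \<longrightarrow> SD L'' L' m (\<lambda>i. \<phi> i \<circ> \<psi> i) \<le> SD L L' m \<phi> \<and>
        ((\<forall>i\<in>{1..m}. \<exists>\<mu>. simplicial_map L L'' \<mu> \<and> contiguity_class L L (\<psi> i \<circ> \<mu>) id) \<and>
         (\<forall>i\<in>{1..m}. \<forall>j\<in>{1..m}. i \<noteq> j \<longrightarrow>
             contiguity_class L'' L' (\<phi> i \<circ> \<psi> i) (\<phi> j \<circ> \<psi> j))
         \<longrightarrow> SD L'' L' m (\<lambda>i. \<phi> i \<circ> \<psi> i) = SD L L' m \<phi>))"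
proof (intro conjI allI impI; elim conjE)
  fix \<phi> :: "nat \<Rightarrow> 'a \<Rightarrow> 'b" and \<psi> :: "nat \<Rightarrow> 'b \<Rightarrow> 'c"
  assume sm: "\<forall>i\<in>{1..m}. simplicial_map L L' (\<phi> i) \<and> simplicial_map L' L'' (\<psi> i)"
    and ch0: "\<forall>i\<in>{1..<m}. contiguity_class L' L'' (\<psi> i) (\<psi> (Suc i))"
  have smp: "\<forall>i\<in>{1..m}. simplicial_map L' L'' (\<psi> i)" using sm by blast
  note ch = ch0 smp
  show le1: "SD L L'' m (\<lambda>i. \<psi> i \<circ> \<phi> i) \<le> SD L L' m \<phi>"
  proof (rule SD_le, rule PP_pull[where h=id], assumption, rule cL, rule sm_id)
    fix J i j assume J: "J \<subseteq> L" and ij: "i \<in> {1..m}" "j \<in> {1..m}"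
      and c: "contiguity_class J L' (\<phi> i \<circ> id) (\<phi> j \<circ> id)"
    have a: "contiguity_class J L'' (\<psi> i \<circ> \<phi> i) (\<psi> i \<circ> \<phi> j)"
      using c cc_comp_left sm ij by fastforce
    have b: "contiguity_class J L'' (\<psi> i \<circ> \<phi> j) (\<psi> j \<circ> \<phi> j)"
      using cc_comp_right[OF cc_chain[OF ch ij]] sm_mono sm ij J by blast
    show "contiguity_class J L'' (\<psi> i \<circ> \<phi> i) (\<psi> j \<circ> \<phi> j)" using a b by (rule cc_trans)
  qed
  assume mu: "\<forall>i\<in>{1..m}. \<exists>\<mu>. simplicial_map L'' L' \<mu> \<and> contiguity_class L' L' (\<mu> \<circ> \<psi> i) id"
  have "SD L L' m \<phi> \<le> SD L L'' m (\<lambda>i. \<psi> i \<circ> \<phi> i)"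
  proof (rule SD_le, rule PP_pull[where h=id], assumption, rule cL, rule sm_id)
    fix J i j assume J: "J \<subseteq> L" and ij: "i \<in> {1..m}" "j \<in> {1..m}"
      and c: "contiguity_class J L'' ((\<lambda>i. \<psi> i \<circ> \<phi> i) i \<circ> id) ((\<lambda>i. \<psi> i \<circ> \<phi> i) j \<circ> id)"
    obtain \<mu> where m1: "simplicial_map L'' L' \<mu>" and m2: "contiguity_class L' L' (\<mu> \<circ> \<psi> i) id"
      using mu ij by blast
    have smi: "simplicial_map J L' (\<phi> i)" and smj: "simplicial_map J L' (\<phi> j)"
      using sm ij J sm_mono by blast+
    have 1: "contiguity_class J L' (\<phi> i) (\<mu> \<circ> \<psi> i \<circ> \<phi> i)"
      using cc_comp_right[OF cc_sym[OF m2] smi] by simp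
    have 2: "contiguity_class J L' (\<mu> \<circ> \<psi> i \<circ> \<phi> i) (\<mu> \<circ> \<psi> j \<circ> \<phi> j)"
      using cc_comp_left[OF c m1] by (simp add: comp_assoc)
    have 3: "contiguity_class J L' (\<mu> \<circ> \<psi> j \<circ> \<phi> j) (\<mu> \<circ> \<psi> i \<circ> \<phi> j)"
      using cc_comp_right[OF cc_comp_left[OF cc_chain[OF ch ij(2) ij(1)] m1] smj] by simp
    have 4: "contiguity_class J L' (\<mu> \<circ> \<psi> i \<circ> \<phi> j) (\<phi> j)"
      using cc_comp_right[OF m2 smj] by simp
    show "contiguity_class J L' (\<phi> i) (\<phi> j)"
      using 1 2 3 4 cc_trans by blast
  qed
  then show "SD L L'' m (\<lambda>i. \<psi> i \<circ> \<phi> i) = SD L L' m \<phi>" using le1 by simp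
next
  fix \<phi> :: "nat \<Rightarrow> 'a \<Rightarrow> 'b" and \<psi> :: "nat \<Rightarrow> 'c \<Rightarrow> 'a"
  assume sm: "\<forall>i\<in>{1..m}. simplicial_map L L' (\<phi> i) \<and> simplicial_map L'' L (\<psi> i)"
    and ch0: "\<forall>i\<in>{1..<m}. contiguity_class L'' L (\<psi> i) (\<psi> (Suc i))"
  have smp: "\<forall>i\<in>{1..m}. simplicial_map L'' L (\<psi> i)" using sm by blast
  note ch = ch0 smp
  show le1: "SD L'' L' m (\<lambda>i. \<phi> i \<circ> \<psi> i) \<le> SD L L' m \<phi>"
  proof (cases "m = 0")
    case True
    then show ?thesis by (intro SD_le) (simp add: PP_m0 cL'')
  next
    case False
    then have m1: "1 \<in> {1..m}" by simp
    show ?thesis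
    proof (rule SD_le, rule PP_pull[where h="\<psi> 1"], assumption, rule cL'')
      show "simplicial_map L'' L (\<psi> 1)" using sm m1 by blast
      fix J i j assume J: "J \<subseteq> L''" and ij: "i \<in> {1..m}" "j \<in> {1..m}"
        and c: "contiguity_class J L' (\<phi> i \<circ> \<psi> 1) (\<phi> j \<circ> \<psi> 1)"
      have a: "contiguity_class J L' (\<phi> i \<circ> \<psi> i) (\<phi> i \<circ> \<psi> 1)"
        using cc_mono[OF cc_comp_left[OF cc_chain[OF ch ij(1) m1]] J] sm ij by blast
      have b: "contiguity_class J L' (\<phi> j \<circ> \<psi> 1) (\<phi> j \<circ> \<psi> j)"
        using cc_mono[OF cc_comp_left[OF cc_chain[OF ch m1 ij(2)]] J] sm ij by blast
      show "contiguity_class J L' ((\<lambda>i. \<phi> i \<circ> \<psi> i) i) ((\<lambda>i. \<phi> i \<circ> \<psi> i) j)"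
        using a c b cc_trans by simp blast
    qed
  qed
  assume mu: "\<forall>i\<in>{1..m}. \<exists>\<mu>. simplicial_map L L'' \<mu> \<and> contiguity_class L L (\<psi> i \<circ> \<mu>) id"
  have "SD L L' m \<phi> \<le> SD L'' L' m (\<lambda>i. \<phi> i \<circ> \<psi> i)"
  proof (cases "m = 0")
    case True
    then show ?thesis by (intro SD_le) (simp add: PP_m0 cL)
  next
    case False
    then have m1: "1 \<in> {1..m}" by simp
    obtain \<mu> where mu1: "simplicial_map L L'' \<mu>" and mu2: "contiguity_class L L (\<psi> 1 \<circ> \<mu>) id"
      using mu m1 by blast
    show ?thesis
    proof (rule SD_le, rule PP_pull[where h="\<mu>"], assumption, rule cL, rule mu1)
      fix J i j assume J: "J \<subseteq> L" and ij: "i \<in> {1..m}" "j \<in> {1..m}"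
        and c: "contiguity_class J L' ((\<lambda>i. \<phi> i \<circ> \<psi> i) i \<circ> \<mu>) ((\<lambda>i. \<phi> i \<circ> \<psi> i) j \<circ> \<mu>)"
      have smi: "simplicial_map L L' (\<phi> i)" and smj: "simplicial_map L L' (\<phi> j)"
        using sm ij by blast+
      have muJ: "simplicial_map J L'' \<mu>" using mu1 J sm_mono by blast
      have 1: "contiguity_class J L' (\<phi> i) (\<phi> i \<circ> \<psi> 1 \<circ> \<mu>)"
        using cc_mono[OF cc_comp_left[OF cc_sym[OF mu2] smi] J] by (simp add: comp_assoc)
      have 2: "contiguity_class J L' (\<phi> i \<circ> \<psi> 1 \<circ> \<mu>) (\<phi> i \<circ> \<psi> i \<circ> \<mu>)"
        using cc_comp_right[OF cc_comp_left[OF cc_chain[OF ch m1 ij(1)] smi] muJ] by (simp add: comp_assoc)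
      have 3: "contiguity_class J L' (\<phi> i \<circ> \<psi> i \<circ> \<mu>) (\<phi> j \<circ> \<psi> j \<circ> \<mu>)"
        using c by simp
      have 4: "contiguity_class J L' (\<phi> j \<circ> \<psi> j \<circ> \<mu>) (\<phi> j \<circ> \<psi> 1 \<circ> \<mu>)"
        using cc_comp_right[OF cc_comp_left[OF cc_chain[OF ch ij(2) m1] smj] muJ] by (simp add: comp_assoc)
      have 5: "contiguity_class J L' (\<phi> j \<circ> \<psi> 1 \<circ> \<mu>) (\<phi> j)"
        using cc_mono[OF cc_comp_left[OF mu2 smj] J] by (simp add: comp_assoc)
      show "contiguity_class J L' (\<phi> i) (\<phi> j)"
        using 1 2 3 4 5 cc_trans by blast
    qed
  qed
  then show "SD L'' L' m (\<lambda>i. \<phi> i \<circ> \<psi> i) = SD L L' m \<phi>" using le1 by simp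
qed

end
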